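(* Let $d\ge 2$. For every integer $N$ there exist finite point sets $P,Q\subset\mathbb{R}^d$ that are not $(1,2)$-separable, but such that every pair of subsets $P^*\subseteq P$, $Q^*\subseteq Q$ with $|P^*|+|Q^*|\le N$ is $(1,2)$-separable. In particular, $(1,2)$-separability does not have the Helly-type property in $\mathbb{R}^d$ (its Helly number is infinite).
   Context: Finite sets $P,Q\subset\mathbb{R}^d$ are $(b,c)$-separable if there exist convex sets $S_1,\dots,S_b$ and $T_1,\dots,T_c$ with $S=\bigcup_i S_i$, $T=\bigcup_j T_j$, $S\cap T=\emptyset$, and either ($P\subseteq S$ and $Q\subseteq T$) or ($Q\subseteq S$ and $P\subseteq T$). A predicate $F$ on pairs of finite point sets has the Helly-type property in $\mathbb{R}^d$ if there is a finite $m$ such that whenever $F(P,Q)$ fails there exist $P^*\subseteq P$, $Q^*\subseteq Q$ with $|P^*|+|Q^*|\le m$ for which $F(P^*,Q^* )$ fails. *)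

theory Defs
  imports "HOL-Analysis.Analysis"
begin

definition separable :: "nat \<Rightarrow> nat \<Rightarrow> 'a::euclidean_space set \<Rightarrow> 'a set \<Rightarrow> bool" where
  "separable b c P Q \<longleftrightarrow>
     (\<exists>S T :: nat \<Rightarrow> 'a set.
        (\<forall>i<b. convex (S i)) \<and> (\<forall>j<c. convex (T j)) \<and>
        (\<Union>i<b. S i) \<inter> (\<Union>j<c. T j) = {} \<and>
        ((P \<subseteq> (\<Union>i<b. S i) \<and> Q \<subseteq> (\<Union>j<c. T j)) \<or>
         (Q \<subseteq> (\<Union>i<b. S i) \<and> P \<subseteq> (\<Union>j<c. T j))))"

definition helly_type :: "('a::euclidean_space set \<Rightarrow> 'a set \<Rightarrow> bool) \<Rightarrow> bool" where
  "helly_type F \<longleftrightarrow>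
     (\<exists>m::nat. \<forall>P Q :: 'a set. finite P \<and> finite Q \<and> \<not> F P Q \<longrightarrow>
        (\<exists>P' Q'. P' \<subseteq> P \<and> Q' \<subseteq> Q \<and> card P' + card Q' \<le> m \<and> \<not> F P' Q'))"

end

theory Submission
  imports Defs
begin

lemma cos_shift_int: "cos ((x::real) + 2*pi * of_int m) = cos x" "sin ((x::real) + 2*pi * of_int m) = sin x"
  by (simp_all add: cos_add sin_add)

lemma sep12_iff: fixes P Q :: "'a::euclidean_space set" shows "separable 1 2 P Q \<longleftrightarrow>
  (\<exists>S T0 T1. convex S \<and> convex T0 \<and> convex T1 \<and> S \<inter> (T0 \<union> T1) = {} \<and>
     ((P \<subseteq> S \<and> Q \<subseteq> T0 \<union> T1) \<or> (Q \<subseteq> S \<and> P \<subseteq> T0 \<union> T1)))"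
proof -
  have a: "{..<1::nat} = {0}" and b: "{..<2::nat} = {0,1}" by auto
  have u1: "(\<Union>i<1. S i) = S 0" for S :: "nat \<Rightarrow> 'a set" unfolding a by simp
  have u2: "(\<Union>j<2. T j) = T 0 \<union> T 1" for T :: "nat \<Rightarrow> 'a set" unfolding b by simp
  have c1: "(\<forall>i<1. P i) = P 0" for P :: "nat \<Rightarrow> bool" unfolding a by auto
  have c2: "(\<forall>i<2. P i) = (P 0 \<and> P 1)" for P :: "nat \<Rightarrow> bool"
    using less_2_cases by auto
  have E: "separable 1 2 P Q = (\<exists>(S :: nat \<Rightarrow> 'a set) (T :: nat \<Rightarrow> 'a set). convex (S 0) \<and> (convex (T 0) \<and> convex (T 1)) \<and>
        S 0 \<inter> (T 0 \<union> T 1) = {} \<and>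
        ((P \<subseteq> S 0 \<and> Q \<subseteq> T 0 \<union> T 1) \<or> (Q \<subseteq> S 0 \<and> P \<subseteq> T 0 \<union> T 1)))"
    unfolding separable_def u1 u2 c1 c2 by simp
  show ?thesis
  proof
    assume "separable 1 2 P Q"
    then obtain S T :: "nat \<Rightarrow> 'a set" where h: "convex (S 0)" "convex (T 0)" "convex (T 1)"
      "S 0 \<inter> (T 0 \<union> T 1) = {}"
      "(P \<subseteq> S 0 \<and> Q \<subseteq> T 0 \<union> T 1) \<or> (Q \<subseteq> S 0 \<and> P \<subseteq> T 0 \<union> T 1)"
      unfolding E by blast
    show "\<exists>S T0 T1. convex S \<and> convex T0 \<and> convex T1 \<and> S \<inter> (T0 \<union> T1) = {} \<and>
     ((P \<subseteq> S \<and> Q \<subseteq> T0 \<union> T1) \<or> (Q \<subseteq> S \<and> P \<subseteq> T0 \<union> T1))"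
      by (rule exI[of _ "S 0"], rule exI[of _ "T 0"], rule exI[of _ "T 1"]) (use h in blast)
  next
    assume "\<exists>S T0 T1. convex S \<and> convex T0 \<and> convex T1 \<and> S \<inter> (T0 \<union> T1) = {} \<and>
     ((P \<subseteq> S \<and> Q \<subseteq> T0 \<union> T1) \<or> (Q \<subseteq> S \<and> P \<subseteq> T0 \<union> T1))"
    then obtain S T0 T1 where h: "convex S" "convex T0" "convex T1" "S \<inter> (T0 \<union> T1) = {}"
      "(P \<subseteq> S \<and> Q \<subseteq> T0 \<union> T1) \<or> (Q \<subseteq> S \<and> P \<subseteq> T0 \<union> T1)" by blast
    define SS :: "nat \<Rightarrow> 'a set" where "SS = (\<lambda>_::nat. S)"
    define TT :: "nat \<Rightarrow> 'a set" where "TT = (\<lambda>j::nat. if j = 0 then T0 else T1)"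
    have "SS 0 = S" "TT 0 = T0" "TT 1 = T1" by (simp_all add: SS_def TT_def)
    then have "convex (SS 0) \<and> (convex (TT 0) \<and> convex (TT 1)) \<and>
        SS 0 \<inter> (TT 0 \<union> TT 1) = {} \<and>
        ((P \<subseteq> SS 0 \<and> Q \<subseteq> TT 0 \<union> TT 1) \<or> (Q \<subseteq> SS 0 \<and> P \<subseteq> TT 0 \<union> TT 1))"
      using h by simp
    then show "separable 1 2 P Q" unfolding E by blast
  qed
qed

lemma sep_mono: "separable b c P Q \<Longrightarrow> P' \<subseteq> P \<Longrightarrow> Q' \<subseteq> Q \<Longrightarrow> separable b c P' Q'"
proof -
  assume a: "separable b c P Q" "P' \<subseteq> P" "Q' \<subseteq> Q"
  then obtain S T where h: "\<forall>i<b. convex (S i)" "\<forall>j<c. convex (T j)"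
        "(\<Union>i<b. S i) \<inter> (\<Union>j<c. T j) = {}"
        "(P \<subseteq> (\<Union>i<b. S i) \<and> Q \<subseteq> (\<Union>j<c. T j)) \<or>
         (Q \<subseteq> (\<Union>i<b. S i) \<and> P \<subseteq> (\<Union>j<c. T j))"
    unfolding separable_def by blast
  have "(P' \<subseteq> (\<Union>i<b. S i) \<and> Q' \<subseteq> (\<Union>j<c. T j)) \<or>
         (Q' \<subseteq> (\<Union>i<b. S i) \<and> P' \<subseteq> (\<Union>j<c. T j))"
    using h(4) a(2,3) by blast
  then show ?thesis unfolding separable_def using h(1-3) by blast
qed

locale constr =
  fixes e1 e2 :: "'a::euclidean_space" and k :: nat
  assumes e1: "e1 \<bullet> e1 = 1" and e2: "e2 \<bullet> e2 = 1" and e12: "e1 \<bullet> e2 = 0" and k: "k \<ge> 1"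
begin

definition "n = 2*k+1"
definition "al = 2*pi / real n"
definition "uu \<phi> = cos \<phi> *\<^sub>R e1 + sin \<phi> *\<^sub>R e2"
definition "qq (i::int) = uu (al * of_int i)"
definition "pp (i::int) = (1/2) *\<^sub>R (qq i + qq (i + int k))"
definition "rho = cos (al * real k / 2)"

lemma n_pos: "n \<ge> 3" using k by (simp add: n_def)

lemma al_n: "al * real n = 2*pi" using n_pos by (simp add: al_def)

lemma uu_inner: "uu a \<bullet> uu b = cos (a - b)"
proof -
  have "uu a \<bullet> uu b = cos a * cos b * (e1 \<bullet> e1) + sin a * sin b * (e2 \<bullet> e2)
      + (cos a * sin b + sin a * cos b) * (e1 \<bullet> e2)"
    by (simp add: uu_def inner_add_left inner_add_right inner_commute algebra_simps)
  then show ?thesis using e1 e2 e12 by (simp add: cos_diff)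
qed

lemma qq_inner: "qq i \<bullet> uu \<phi> = cos (al * of_int i - \<phi>)"
  by (simp add: qq_def uu_inner)

lemma pp_inner: "pp i \<bullet> uu \<phi> = rho * cos (al * (of_int i + real k / 2) - \<phi>)"
proof -
  define A where "A = al * (of_int i + real k / 2) - \<phi>"
  define B where "B = al * real k / 2"
  have 1: "al * of_int i - \<phi> = A - B" by (simp add: A_def B_def algebra_simps)
  have 2: "al * of_int (i + int k) - \<phi> = A + B" by (simp add: A_def B_def algebra_simps)
  have "pp i \<bullet> uu \<phi> = (cos (A - B) + cos (A + B)) / 2"
    unfolding pp_def using qq_inner[of i \<phi>] qq_inner[of "i + int k" \<phi>] 1 2
    by (simp add: inner_add_left)
  also have "\<dots> = cos B * cos A" by (simp add: cos_add cos_diff)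
  finally show ?thesis by (simp add: rho_def A_def B_def)
qed

lemma qq_periodic: "qq (i + int n * m) = qq i"
proof -
  have "al * of_int (i + int n * m) = al * of_int i + 2*pi * of_int m"
    using al_n by (simp add: algebra_simps)
  then show ?thesis by (simp add: qq_def uu_def cos_shift_int)
qed

lemma qq_mod: "qq (i mod int n) = qq i"
  using qq_periodic[of "i mod int n" "i div int n"] by (metis mod_mult_div_eq mult.commute)

lemma pp_mod: "pp (i mod int n) = pp i"
proof -
  have "qq (i mod int n + int k) = qq (i + int k)"
    by (metis qq_mod mod_add_left_eq)
  then show ?thesis by (simp add: pp_def qq_mod)
qed

lemma al_pos: "al > 0" using n_pos by (simp add: al_def)

lemma alk: "al * real k / 2 < pi/2"
proof -
  have "al * real k / 2 = pi * (real k / real (2*k+1))" by (simp add: al_def n_def field_simps)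
  moreover have "real k / real (2*k+1) < 1/2" by (simp add: divide_less_eq)
  ultimately show ?thesis using pi_gt_zero
    by (metis mult_strict_left_mono times_divide_eq_right mult_1_right)
qed

lemma al_le: "al \<le> pi"
proof -
  have "al = pi * (2 / real n)" by (simp add: al_def)
  moreover have "2 / real n \<le> 1" using n_pos by simp
  ultimately show ?thesis using pi_gt_zero
    by (metis mult_left_le less_eq_real_def)
qed

lemma rho_pos: "rho > 0"
  unfolding rho_def using alk al_pos k by (intro cos_gt_zero) auto

lemma cos_al: "cos al < 1"
  using cos_monotone_0_pi[of 0 al] al_pos al_le by simp

lemma cos_ge: assumes "\<bar>s\<bar> \<le> real k / 2" shows "rho \<le> cos (al * s)"
proof -
  have e: "cos (al * s) = cos \<bar>al * s\<bar>" by (rule cos_abs_real[symmetric])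
  have "\<bar>al * s\<bar> = al * \<bar>s\<bar>" using al_pos by (simp add: abs_mult)
  also have "\<dots> \<le> al * (real k / 2)" using assms al_pos by (intro mult_left_mono) auto
  finally have a: "\<bar>al * s\<bar> \<le> al * real k / 2" by simp
  have b: "al * real k / 2 \<le> pi" using alk pi_gt_zero by linarith
  have "cos (al * real k / 2) \<le> cos \<bar>al * s\<bar>"
    by (rule cos_monotone_0_pi_le[OF abs_ge_zero a b])
  then show ?thesis unfolding rho_def by simp
qed

lemma cos_gt: assumes "\<bar>s\<bar> \<le> (real k - 1) / 2" shows "rho < cos (al * s)"
proof -
  have e: "cos (al * s) = cos \<bar>al * s\<bar>" by (rule cos_abs_real[symmetric])
  have "\<bar>al * s\<bar> = al * \<bar>s\<bar>" using al_pos by (simp add: abs_mult)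
  also have "\<dots> \<le> al * ((real k - 1) / 2)" using assms al_pos by (intro mult_left_mono) auto
  also have "\<dots> < al * (real k / 2)" using al_pos by (intro mult_strict_left_mono) auto
  finally have a: "\<bar>al * s\<bar> < al * real k / 2" by simp
  have b: "al * real k / 2 \<le> pi" using alk pi_gt_zero by linarith
  have "cos (al * real k / 2) < cos \<bar>al * s\<bar>"
    by (rule cos_monotone_0_pi[OF abs_ge_zero a b])
  then show ?thesis unfolding rho_def by simp
qed

lemma qq_e1: "qq i \<bullet> e1 = cos (al * of_int i)"
  using e1 e12 inner_commute[of e2 e1] by (simp add: qq_def uu_def inner_add_left)

lemma cos_mod: "cos (al * of_int (m mod int n)) = cos (al * of_int m)"
  using qq_e1[of m] qq_e1[of "m mod int n"] qq_mod[of m] by simp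

lemma cos_mult: assumes "m mod int n \<noteq> 0" shows "cos (al * of_int m) \<le> cos al"
proof -
  define r where "r = m mod int n"
  have np: "int n > 0" using n_pos by simp
  have r0: "0 \<le> r" "r < int n" unfolding r_def using np by (rule pos_mod_sign, rule pos_mod_bound)
  have r: "1 \<le> r" "r \<le> int n - 1" using r0 assms unfolding r_def by linarith+
  have e: "cos (al * of_int m) = cos (al * of_int r)" using cos_mod[of m] by (simp add: r_def)
  show ?thesis
  proof (cases "al * of_int r \<le> pi")
    case True
    have "al * 1 \<le> al * of_int r" using r al_pos by (intro mult_left_mono) auto
    then have "cos (al * of_int r) \<le> cos al" using True al_pos
      by (intro cos_monotone_0_pi_le) auto
    then show ?thesis using e by simp
  next
    case False
    have e2: "cos (al * of_int r) = cos (2*pi - al * of_int r)" by (rule cos_2pi_minus[symmetric])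
    have "2*pi - al * of_int r = al * real n - al * of_int r" using al_n by simp
    also have "\<dots> = al * of_int (int n - r)" by (simp add: right_diff_distrib)
    finally have e3: "2*pi - al * of_int r = al * of_int (int n - r)" .
    have "al * 1 \<le> al * of_int (int n - r)" using r al_pos by (intro mult_left_mono) auto
    moreover have "al * of_int (int n - r) \<le> pi" using False al_n e3 by linarith
    ultimately have "cos (al * of_int (int n - r)) \<le> cos al" using al_pos
      by (intro cos_monotone_0_pi_le) auto
    then show ?thesis using e e2 e3 by simp
  qed
qed


definition "PP = pp ` {0..<int n}"
definition "QQ = qq ` {0..<int n}"

lemma mod_in: "i mod int n \<in> {0..<int n}" using n_pos by simp

lemma pp_in: "pp i \<in> PP" unfolding PP_def using pp_mod[of i] mod_in[of i] by (metis image_eqI)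
lemma qq_in: "qq i \<in> QQ" unfolding QQ_def using qq_mod[of i] mod_in[of i] by (metis image_eqI)

lemma mid: assumes "convex C" "qq i \<in> C" "qq (i + int k) \<in> C" shows "pp i \<in> C"
proof -
  have "pp i = (1/2) *\<^sub>R qq i + (1/2) *\<^sub>R qq (i + int k)"
    by (simp add: pp_def scaleR_right_distrib)
  then show ?thesis using convexD[OF assms, of "1/2" "1/2"] by simp
qed

lemma mod_ne: assumes "i \<in> {0..<int n}" "j \<in> {0..<int n}" "i \<noteq> j" shows "(i - j) mod int n \<noteq> 0"
proof
  assume "(i - j) mod int n = 0"
  then have "i mod int n = j mod int n" by (simp add: mod_eq_dvd_iff mod_eq_0_iff_dvd)
  then show False using assms by simp
qed

lemma qq_inj: "inj_on qq {0..<int n}"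
proof (rule inj_onI, rule ccontr)
  fix i j assume ij: "i \<in> {0..<int n}" "j \<in> {0..<int n}" "qq i = qq j" "i \<noteq> j"
  have "qq i \<bullet> uu (al * of_int j) = cos (al * of_int (i - j))"
    by (simp add: qq_inner algebra_simps)
  also have "\<dots> \<le> cos al" by (rule cos_mult[OF mod_ne[OF ij(1,2,4)]])
  also have "\<dots> < 1" by (rule cos_al)
  finally show False using ij(3) qq_inner[of j "al * of_int j"] by simp
qed

lemma pp_inj: "inj_on pp {0..<int n}"
proof (rule inj_onI, rule ccontr)
  fix i j assume ij: "i \<in> {0..<int n}" "j \<in> {0..<int n}" "pp i = pp j" "i \<noteq> j"
  have "pp i \<bullet> uu (al * (of_int j + real k / 2)) = rho * cos (al * of_int (i - j))"
    by (simp add: pp_inner algebra_simps)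
  also have "\<dots> \<le> rho * cos al" using rho_pos by (intro mult_left_mono cos_mult[OF mod_ne[OF ij(1,2,4)]]) auto
  also have "\<dots> < rho" using rho_pos cos_al by simp
  finally show False using ij(3) pp_inner[of j "al * (of_int j + real k / 2)"] by simp
qed

lemma card_PP: "card PP = n" unfolding PP_def using card_image[OF pp_inj] by simp
lemma card_QQ: "card QQ = n" unfolding QQ_def using card_image[OF qq_inj] by simp


lemma not_sep: "\<not> separable 1 2 PP QQ"
proof
  assume "separable 1 2 PP QQ"
  then obtain S T0 T1 where h: "convex S" "convex T0" "convex T1" "S \<inter> (T0 \<union> T1) = {}"
      "(PP \<subseteq> S \<and> QQ \<subseteq> T0 \<union> T1) \<or> (QQ \<subseteq> S \<and> PP \<subseteq> T0 \<union> T1)"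
    unfolding sep12_iff by blast
  show False
  proof (cases "QQ \<subseteq> S \<and> PP \<subseteq> T0 \<union> T1")
    case True
    then have "pp 0 \<in> S" using mid[OF h(1)] qq_in by blast
    moreover have "pp 0 \<in> T0 \<union> T1" using True pp_in by blast
    ultimately show False using h(4) by blast
  next
    case False
    then have PS: "PP \<subseteq> S" and QT: "QQ \<subseteq> T0 \<union> T1" using h(5) by auto
    define c where "c i = (qq i \<in> T0)" for i
    have F: "c (i + int k) = (\<not> c i)" for i
    proof -
      have "pp i \<in> S" using PS pp_in by blast
      then have n0: "pp i \<notin> T0" "pp i \<notin> T1" using h(4) by auto
      have "qq i \<in> T0 \<union> T1" "qq (i + int k) \<in> T0 \<union> T1" using QT qq_in by auto
      then show ?thesis using n0 mid[OF h(2), of i] mid[OF h(3), of i] unfolding c_def by blast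
    qed
    have G: "c (i - 1) = c i" for i
    proof -
      have "c (i + int k + int k) = c i" using F[of i] F[of "i + int k"] by simp
      moreover have "qq (i + int k + int k) = qq (i - 1)"
        using qq_periodic[of "i - 1" 1] by (simp add: n_def algebra_simps)
      ultimately show ?thesis unfolding c_def by simp
    qed
    have "c (int j) = c 0" for j :: nat
    proof (induction j)
      case (Suc j) then show ?case using G[of "int (Suc j)"] by simp
    qed simp
    then show False using F[of 0] by simp
  qed
qed

lemma sep_q: assumes j: "j \<in> {0..<int n}" shows "separable 1 2 PP (QQ - {qq j})"
proof -
  define u0 where "u0 = uu (al * (of_int j + (real k + 1) / 2))"
  define u1 where "u1 = uu (al * (of_int j + real k + (real k + 1) / 2))"
  let ?S = "{x. x \<bullet> u0 \<le> rho} \<inter> {x. x \<bullet> u1 \<le> rho}"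
  let ?T0 = "{x. x \<bullet> u0 > rho}"
  let ?T1 = "{x. x \<bullet> u1 > rho}"
  have cS: "convex ?S" using convex_halfspace_le[of u0] convex_halfspace_le[of u1]
    by (intro convex_Int) (simp_all add: inner_commute)
  have cT: "convex ?T0" "convex ?T1" using convex_halfspace_gt[of _ u0] convex_halfspace_gt[of _ u1]
    by (simp_all add: inner_commute)
  have dis: "?S \<inter> (?T0 \<union> ?T1) = {}" by auto
  have PS: "PP \<subseteq> ?S"
  proof
    fix x assume "x \<in> PP"
    then obtain i where x: "x = pp i" unfolding PP_def by blast
    have "\<And>\<phi>. x \<bullet> uu \<phi> \<le> rho" unfolding x pp_inner using rho_pos
      by (metis cos_le_one mult_left_le less_eq_real_def)
    then show "x \<in> ?S" by (simp add: u0_def u1_def)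
  qed
  have QT: "QQ - {qq j} \<subseteq> ?T0 \<union> ?T1"
  proof
    fix x assume "x \<in> QQ - {qq j}"
    then obtain i where i: "i \<in> {0..<int n}" and x: "x = qq i" and ne: "qq i \<noteq> qq j" unfolding QQ_def by blast
    define t where "t = (i - j - 1) mod int n"
    have t0: "0 \<le> t" "t < int n" unfolding t_def using n_pos by simp_all
    have "(j + 1 + t) mod int n = i mod int n" unfolding t_def by (simp add: mod_add_right_eq)
    then have xq: "x = qq (j + 1 + t)" using qq_mod x by metis
    have "t \<noteq> int n - 1"
    proof
      assume "t = int n - 1"
      then have "x = qq (j + int n * 1)" using xq by simp
      then show False using qq_periodic[of j 1] ne x by simp
    qed
    then have t1: "t \<le> 2 * int k - 1" using t0 by (simp add: n_def)
    show "x \<in> ?T0 \<union> ?T1"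
    proof (cases "t \<le> int k - 1")
      case True
      have "x \<bullet> u0 = cos (al * of_int (j + 1 + t) - al * (of_int j + (real k + 1) / 2))"
        unfolding xq u0_def qq_inner ..
      also have "\<dots> = cos (al * (of_int t + 1/2 - real k / 2))"
        by (rule arg_cong[where f=cos]) (simp add: field_simps)
      finally have "x \<bullet> u0 = cos (al * (of_int t + 1/2 - real k / 2))" .
      moreover have "rho < cos (al * (of_int t + 1/2 - real k / 2))"
      proof (rule cos_gt)
        have "real_of_int t \<le> real k - 1" "0 \<le> real_of_int t" using True t0 by linarith+
        then show "\<bar>of_int t + 1/2 - real k / 2\<bar> \<le> (real k - 1) / 2" by (simp add: abs_le_iff field_simps)
      qed
      ultimately show ?thesis by simp
    next
      case False
      have "x \<bullet> u1 = cos (al * of_int (j + 1 + t) - al * (of_int j + real k + (real k + 1) / 2))"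
        unfolding xq u1_def qq_inner ..
      also have "\<dots> = cos (al * (of_int t - real k + 1/2 - real k / 2))"
        by (rule arg_cong[where f=cos]) (simp add: field_simps)
      finally have "x \<bullet> u1 = cos (al * (of_int t - real k + 1/2 - real k / 2))" .
      moreover have "rho < cos (al * (of_int t - real k + 1/2 - real k / 2))"
      proof (rule cos_gt)
        have "real_of_int t \<ge> real k" "real_of_int t \<le> 2 * real k - 1" using False t1 by linarith+
        then show "\<bar>of_int t - real k + 1/2 - real k / 2\<bar> \<le> (real k - 1) / 2" by (simp add: abs_le_iff field_simps)
      qed
      ultimately show ?thesis by simp
    qed
  qed
  show ?thesis unfolding sep12_iff using cS cT dis PS QT by blast
qed

lemma sep_p: assumes j: "j \<in> {0..<int n}" shows "separable 1 2 (PP - {pp j}) QQ"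
proof -
  define u0 where "u0 = uu (al * (of_int j + real k / 2))"
  define u1 where "u1 = uu (al * (of_int j + real k + 1 + (real k - 1) / 2))"
  define c where "c = rho * cos al"
  have crho: "c < rho" using rho_pos cos_al by (simp add: c_def)
  let ?S = "{x. x \<bullet> u0 \<le> c} \<inter> {x. x \<bullet> u1 \<le> rho}"
  let ?T0 = "{x. x \<bullet> u0 > c}"
  let ?T1 = "{x. x \<bullet> u1 > rho}"
  have cS: "convex ?S" using convex_halfspace_le[of u0] convex_halfspace_le[of u1]
    by (intro convex_Int) (simp_all add: inner_commute)
  have cT: "convex ?T0" "convex ?T1" using convex_halfspace_gt[of _ u0] convex_halfspace_gt[of _ u1]
    by (simp_all add: inner_commute)
  have dis: "?S \<inter> (?T0 \<union> ?T1) = {}" by auto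
  have PS: "PP - {pp j} \<subseteq> ?S"
  proof
    fix x assume "x \<in> PP - {pp j}"
    then obtain i where i: "i \<in> {0..<int n}" and x: "x = pp i" and ne: "i \<noteq> j" unfolding PP_def by blast
    have "x \<bullet> u1 \<le> rho" unfolding x pp_inner u1_def using rho_pos
      by (metis cos_le_one mult_left_le less_eq_real_def)
    moreover have "x \<bullet> u0 = rho * cos (al * of_int (i - j))"
      unfolding x pp_inner u0_def by (simp add: algebra_simps)
    moreover have "rho * cos (al * of_int (i - j)) \<le> c" unfolding c_def
      using rho_pos by (intro mult_left_mono cos_mult[OF mod_ne[OF i j ne]]) auto
    ultimately show "x \<in> ?S" by simp
  qed
  have QT: "QQ \<subseteq> ?T0 \<union> ?T1"
  proof
    fix x assume "x \<in> QQ"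
    then obtain i where i: "i \<in> {0..<int n}" and x: "x = qq i" unfolding QQ_def by blast
    define t where "t = (i - j) mod int n"
    have t0: "0 \<le> t" "t < int n" unfolding t_def using n_pos by simp_all
    have "(j + t) mod int n = i mod int n" unfolding t_def by (simp add: mod_add_right_eq)
    then have xq: "x = qq (j + t)" using qq_mod x by metis
    have t1: "t \<le> 2 * int k" using t0 by (simp add: n_def)
    show "x \<in> ?T0 \<union> ?T1"
    proof (cases "t \<le> int k")
      case True
      have "x \<bullet> u0 = cos (al * of_int (j + t) - al * (of_int j + real k / 2))"
        unfolding xq u0_def qq_inner ..
      also have "\<dots> = cos (al * (of_int t - real k / 2))"
        by (rule arg_cong[where f=cos]) (simp add: field_simps)
      finally have "x \<bullet> u0 = cos (al * (of_int t - real k / 2))" .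
      moreover have "rho \<le> cos (al * (of_int t - real k / 2))"
      proof (rule cos_ge)
        have "real_of_int t \<le> real k" "0 \<le> real_of_int t" using True t0 by linarith+
        then show "\<bar>of_int t - real k / 2\<bar> \<le> real k / 2" by (simp add: abs_le_iff field_simps)
      qed
      ultimately show ?thesis using crho by simp
    next
      case False
      have "x \<bullet> u1 = cos (al * of_int (j + t) - al * (of_int j + real k + 1 + (real k - 1) / 2))"
        unfolding xq u1_def qq_inner ..
      also have "\<dots> = cos (al * (of_int t - real k - 1 - (real k - 1) / 2))"
        by (rule arg_cong[where f=cos]) (simp add: field_simps)
      finally have "x \<bullet> u1 = cos (al * (of_int t - real k - 1 - (real k - 1) / 2))" .
      moreover have "rho < cos (al * (of_int t - real k - 1 - (real k - 1) / 2))"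
      proof (rule cos_gt)
        have "real_of_int t \<ge> real k + 1" "real_of_int t \<le> 2 * real k" using False t1 by linarith+
        then show "\<bar>of_int t - real k - 1 - (real k - 1) / 2\<bar> \<le> (real k - 1) / 2" by (simp add: abs_le_iff field_simps)
      qed
      ultimately show ?thesis by simp
    qed
  qed
  show ?thesis unfolding sep12_iff using cS cT dis PS QT by blast
qed

lemma small_sep: assumes "P' \<subseteq> PP" "Q' \<subseteq> QQ" "card P' + card Q' < 2 * n"
  shows "separable 1 2 P' Q'"
proof (cases "Q' = QQ")
  case True
  then have "P' \<noteq> PP" using assms(3) card_PP card_QQ by auto
  then obtain j where j: "j \<in> {0..<int n}" "pp j \<notin> P'" using assms(1) unfolding PP_def by blast
  show ?thesis using sep_mono[OF sep_p[OF j(1)]] j(2) assms(1,2) by blast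
next
  case False
  then obtain j where j: "j \<in> {0..<int n}" "qq j \<notin> Q'" using assms(2) unfolding QQ_def by blast
  show ?thesis using sep_mono[OF sep_q[OF j(1)]] j(2) assms(1,2) by blast
qed

lemma fin: "finite PP" "finite QQ" unfolding PP_def QQ_def by simp_all

end

lemma two_basis:
  assumes "DIM('a) \<ge> 2"
  obtains e1 e2 :: "'a::euclidean_space" where "e1 \<in> Basis" "e2 \<in> Basis" "e1 \<noteq> e2"
proof -
  have "Basis \<noteq> ({}::'a set)" by simp
  then obtain e1 :: 'a where e1: "e1 \<in> Basis" by blast
  have "card (Basis - {e1}) \<ge> 1" using assms e1 by (simp add: card_Diff_singleton)
  then have "card (Basis - {e1}) \<noteq> 0" by linarith
  then have "Basis - {e1} \<noteq> {}" by (metis card.empty)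
  then obtain e2 where "e2 \<in> Basis - {e1}" by blast
  then show ?thesis using that e1 by blast
qed

theorem mainTheorem7:
  assumes "DIM('a::euclidean_space) \<ge> 2"
  shows "(\<forall>N::int. \<exists>P Q :: 'a set. finite P \<and> finite Q \<and>
            \<not> separable 1 2 P Q \<and>
            (\<forall>P' Q'. P' \<subseteq> P \<and> Q' \<subseteq> Q \<and> int (card P' + card Q') \<le> N
                 \<longrightarrow> separable 1 2 P' Q'))
         \<and> \<not> helly_type (separable 1 2 :: 'a set \<Rightarrow> 'a set \<Rightarrow> bool)"
proof -
  obtain e1 e2 :: 'a where b: "e1 \<in> Basis" "e2 \<in> Basis" "e1 \<noteq> e2"
    using two_basis[OF assms] by blast
  have A: "\<exists>P Q :: 'a set. finite P \<and> finite Q \<and>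
            \<not> separable 1 2 P Q \<and>
            (\<forall>P' Q'. P' \<subseteq> P \<and> Q' \<subseteq> Q \<and> int (card P' + card Q') \<le> N
                 \<longrightarrow> separable 1 2 P' Q')" for N :: int
  proof -
    define k where "k = nat N + 1"
    have i1: "e1 \<bullet> e1 = 1" using b(1) by (simp add: inner_Basis)
    have i2: "e2 \<bullet> e2 = 1" using b(2) by (simp add: inner_Basis)
    have i3: "e1 \<bullet> e2 = 0" using b by (simp add: inner_Basis)
    have i4: "k \<ge> 1" by (simp add: k_def)
    interpret constr e1 e2 k by (rule constr.intro[OF i1 i2 i3 i4])
    show ?thesis
    proof (intro exI conjI allI impI)
      show "finite PP" "finite QQ" by (rule fin)+
      show "\<not> separable 1 2 PP QQ" by (rule not_sep)
      fix P' Q' assume h: "P' \<subseteq> PP \<and> Q' \<subseteq> QQ \<and> int (card P' + card Q') \<le> N"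
      have nk: "int n = 2 * (int (nat N) + 1) + 1" using n_def k_def by simp
      have "N \<le> int (nat N)" by simp
      then have "int (card P' + card Q') < int (2 * n)" using h nk by simp
      then have "card P' + card Q' < 2 * n" by linarith
      then show "separable 1 2 P' Q'" using small_sep h by blast
    qed
  qed
  moreover have "\<not> helly_type (separable 1 2 :: 'a set \<Rightarrow> 'a set \<Rightarrow> bool)"
    unfolding helly_type_def
  proof
    assume "\<exists>m::nat. \<forall>P Q :: 'a set. finite P \<and> finite Q \<and> \<not> separable 1 2 P Q \<longrightarrow>
        (\<exists>P' Q'. P' \<subseteq> P \<and> Q' \<subseteq> Q \<and> card P' + card Q' \<le> m \<and> \<not> separable 1 2 P' Q')"
    then obtain m :: nat where m: "\<And>P Q :: 'a set. finite P \<and> finite Q \<and> \<not> separable 1 2 P Q \<Longrightarrow>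
        (\<exists>P' Q'. P' \<subseteq> P \<and> Q' \<subseteq> Q \<and> card P' + card Q' \<le> m \<and> \<not> separable 1 2 P' Q')"
      by blast
    obtain P Q :: "'a set" where PQ: "finite P" "finite Q" "\<not> separable 1 2 P Q"
      "\<And>P' Q'. P' \<subseteq> P \<and> Q' \<subseteq> Q \<and> int (card P' + card Q') \<le> int m \<Longrightarrow> separable 1 2 P' Q'"
      using A[of "int m"] by blast
    obtain P' Q' where h: "P' \<subseteq> P" "Q' \<subseteq> Q" "card P' + card Q' \<le> m" "\<not> separable 1 2 P' Q'"
      using m[of P Q] PQ(1-3) by blast
    have "separable 1 2 P' Q'" using h(1-3) by (intro PQ(4)) simp
    then show False using h(4) by contradiction
  qed
  ultimately show ?thesis by blast
qed

end
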